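(* For $U>0$, $\mu\in\mathbb{R}$, $T\ge0$ there exist constants $\eta>0$, $C>0$ depending only on $T,U,\mu$ such that for all $(\gamma,\alpha,\rho_0)\in\mathcal{D}$, $\mathcal{F}(\gamma,\alpha,\rho_0)\ge \eta(\rho_0^2+\rho_\gamma^2)-C$, where $\rho_\gamma=\int_{\mathbb{T}^3}\gamma\,dp$. In particular, for any minimizing sequence $(\gamma_n,\alpha_n,\rho_{0,n})$ of $\mathcal{F}$ over $\mathcal{D}$, the sequence $\rho_{0,n}$ is bounded and the sequences $\gamma_n$ and $\alpha_n$ are bounded in $L^1(\mathbb{T}^3)$.
   Context: Let $\mathbb{T}^3=[-\pi,\pi]^3$ with periodic identification and normalized Haar measure $dp$. Let $\varepsilon(p)=4\sum_{k=1}^3\sin^2(p_k/2)$. $\mathcal{D}=\{(\gamma,\alpha,\rho_0): \gamma\in L^1(\mathbb{T}^3),\ \gamma\ge0,\ \alpha^2\le\gamma(1+\gamma)\text{ a.e.},\ \rho_0\ge0\}$. With $\beta=\sqrt{(\tfrac12+\gamma)^2-\alpha^2}$, $S(\gamma,\alpha)=\int\big[(\beta+\tfrac12)\ln(\beta+\tfrac12)-(\beta-\tfrac12)\ln(\beta-\tfrac12)\big]dp$, and $\mathcal{F}(\gamma,\alpha,\rho_0)=\int(\varepsilon-\mu)\gamma\,dp-\mu\rho_0-TS(\gamma,\alpha)+\frac U2(\int\alpha)^2+U(\int\gamma)^2+U\rho_0\int\alpha+2U\rho_0\int\gamma+\frac U2\rho_0^2$ (integrals over $\mathbb{T}^3$).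 *)

theory Defs
  imports "HOL-Analysis.Analysis"
begin

text \<open>The torus T^3 = [-pi,pi]^3 with normalized Haar measure dp, realised as the
uniform (normalized Lebesgue) probability measure on the cube.\<close>
definition torus :: "(real^3) measure" where
  "torus = uniform_measure lborel (cbox (\<chi> i. - pi) (\<chi> i. pi))"

definition disp :: "real^3 \<Rightarrow> real" where
  "disp p = 4 * (\<Sum>k\<in>UNIV. (sin (p$k / 2))\<^sup>2)"

definition betaf :: "(real^3 \<Rightarrow> real) \<Rightarrow> (real^3 \<Rightarrow> real) \<Rightarrow> real^3 \<Rightarrow> real" where
  "betaf g a p = sqrt ((1/2 + g p)\<^sup>2 - (a p)\<^sup>2)"

definition sfun :: "real \<Rightarrow> real" where
  "sfun b = (b + 1/2) * ln (b + 1/2) - (b - 1/2) * ln (b - 1/2)"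

definition entropy :: "(real^3 \<Rightarrow> real) \<Rightarrow> (real^3 \<Rightarrow> real) \<Rightarrow> real" where
  "entropy g a = (\<integral>p. sfun (betaf g a p) \<partial>torus)"

definition domD :: "((real^3 \<Rightarrow> real) \<times> (real^3 \<Rightarrow> real) \<times> real) set" where
  "domD = {(g, a, r). integrable torus g \<and> a \<in> borel_measurable torus \<and>
      (AE p in torus. 0 \<le> g p \<and> (a p)\<^sup>2 \<le> g p * (1 + g p)) \<and> 0 \<le> r}"

definition Ffun :: "real \<Rightarrow> real \<Rightarrow> real \<Rightarrow> (real^3 \<Rightarrow> real) \<Rightarrow> (real^3 \<Rightarrow> real) \<Rightarrow> real \<Rightarrow> real" where
  "Ffun T U \<mu> g a r =
     (\<integral>p. (disp p - \<mu>) * g p \<partial>torus) - \<mu> * r - T * entropy g a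
     + U / 2 * (\<integral>p. a p \<partial>torus)\<^sup>2 + U * (\<integral>p. g p \<partial>torus)\<^sup>2
     + U * r * (\<integral>p. a p \<partial>torus) + 2 * U * r * (\<integral>p. g p \<partial>torus) + U / 2 * r\<^sup>2"

end

theory Submission
  imports Defs "HOL-Probability.Probability_Measure"
begin
lemma sfun_le:
  fixes b :: real assumes "b \<ge> 1/2" shows "sfun b \<le> b + 1/2"
proof (cases "b = 1/2")
  case True then show ?thesis by (simp add: sfun_def True)
next
  case False
  define x where "x = b - 1/2"
  have x: "x > 0" using assms False x_def by auto
  have b: "b + 1/2 = x + 1" "b - 1/2 = x" by (auto simp: x_def)
  have l1: "ln (x + 1) \<le> x" using ln_add_one_self_le_self[of x] x by (simp add: add.commute)
  have "ln (x+1) - ln x = ln (1 + 1/x)" 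
  proof -
    have "1 + 1/x = (x+1)/x" using x by (simp add: field_simps)
    thus ?thesis using x by (simp add: ln_div)
  qed
  also have "\<dots> \<le> 1/x" using ln_add_one_self_le_self[of "1/x"] x by auto
  finally have "x * (ln (x+1) - ln x) \<le> x * (1/x)" using x by (intro mult_left_mono) auto
  hence l2: "x * (ln (x+1) - ln x) \<le> 1" using x by simp
  have "sfun b = ln (x+1) + x * (ln (x+1) - ln x)" unfolding sfun_def b by (simp add: algebra_simps)
  with l1 l2 show ?thesis using b by linarith
qed

lemma sqb:
  fixes U c x :: real assumes U: "U > 0"
  shows "c * x \<le> U/16 * x\<^sup>2 + 4*c\<^sup>2/U"
proof -
  have e: "U/16 * x\<^sup>2 + 4*c\<^sup>2/U - c * x = (U*x - 8*c)\<^sup>2 / (16*U)"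
    using U by (simp add: field_simps power2_eq_square)
  have "(U*x - 8*c)\<^sup>2 / (16*U) \<ge> 0" using U by simp
  thus ?thesis using e by linarith
qed

lemma alg:
  fixes U T \<mu> r \<rho> A I1 TS :: real
  assumes U: "U > 0" and T: "T \<ge> 0" and r: "r \<ge> 0" and rho: "\<rho> \<ge> 0"
    and A: "\<bar>A\<bar> \<le> \<rho> + 1/2" and I1: "I1 \<ge> - \<mu> * \<rho>" and TS: "TS \<le> T + T * \<rho>"
  shows "I1 - \<mu> * r - TS + U / 2 * A\<^sup>2 + U * \<rho>\<^sup>2 + U * r * A + 2 * U * r * \<rho> + U / 2 * r\<^sup>2
     \<ge> U/16 * (r\<^sup>2 + \<rho>\<^sup>2) - (U/8 + T + 4*\<mu>\<^sup>2/U + 4*(\<bar>\<mu>\<bar>+T)\<^sup>2/U + 1)"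
proof -
  have q1: "U / 2 * A\<^sup>2 + U * r * A + U / 2 * r\<^sup>2 = U/2 * (A + r)\<^sup>2" by (simp add: power2_eq_square algebra_simps)
  have q2: "(A + r)\<^sup>2 \<ge> r\<^sup>2/2 - A\<^sup>2"
  proof -
    have "0 \<le> (A + r + A)\<^sup>2" by simp
    thus ?thesis by (simp add: power2_eq_square algebra_simps)
  qed
  have A2: "A\<^sup>2 \<le> (\<rho> + 1/2)\<^sup>2" using A by (metis abs_le_square_iff abs_of_nonneg rho add_nonneg_nonneg less_eq_real_def zero_less_divide_1_iff zero_less_numeral zero_less_one)
  have A3: "(\<rho> + 1/2)\<^sup>2 \<le> 2*\<rho>\<^sup>2 + 1/2"
  proof -
    have "0 \<le> (\<rho> - 1/2)\<^sup>2" by simp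
    thus ?thesis by (simp add: power2_eq_square algebra_simps)
  qed
  have "U/2 * (A + r)\<^sup>2 \<ge> U/4 * (A + r)\<^sup>2" using U by (intro mult_right_mono) auto
  moreover have "U/4 * (A + r)\<^sup>2 \<ge> U/4 * (r\<^sup>2/2 - A\<^sup>2)" using U q2 by (intro mult_left_mono) auto
  moreover have "U/4 * A\<^sup>2 \<le> U/4 * (2*\<rho>\<^sup>2 + 1/2)" using U A2 A3 by (intro mult_left_mono) auto
  ultimately have Q: "U/2 * (A + r)\<^sup>2 \<ge> U/8 * r\<^sup>2 - U/2 * \<rho>\<^sup>2 - U/8" by (simp add: algebra_simps)
  have rr: "2*U*r*\<rho> \<ge> 0" using U r rho by simp
  have s1: "\<bar>\<mu>\<bar> * r \<le> U/16 * r\<^sup>2 + 4*\<mu>\<^sup>2/U"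
    using sqb[OF U, of "\<bar>\<mu>\<bar>" r] by simp
  have s2: "(\<bar>\<mu>\<bar>+T) * \<rho> \<le> U/16 * \<rho>\<^sup>2 + 4*(\<bar>\<mu>\<bar>+T)\<^sup>2/U"
    using sqb[OF U, of "\<bar>\<mu>\<bar>+T" \<rho>] by simp
  have m1: "\<mu> * r \<le> \<bar>\<mu>\<bar> * r" using r by (simp add: mult_right_mono)
  have m2: "- \<mu> * \<rho> \<ge> - \<bar>\<mu>\<bar> * \<rho>" using rho by (simp add: mult_right_mono)
  have p: "U/2*\<rho>\<^sup>2 \<ge> U/16*\<rho>\<^sup>2 + U/16*\<rho>\<^sup>2" using U by simp
  show ?thesis using q1 Q rr s1 s2 m1 m2 I1 TS p by (simp add: algebra_simps)
qed

lemma ps: "prob_space torus"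
  unfolding torus_def
proof (rule prob_space_uniform_measure)
  let ?A = "cbox (\<chi> i. - pi) (\<chi> i. pi) :: (real^3) set"
  have f: "emeasure lborel ?A < \<infinity>" by (rule emeasure_bounded_finite) simp
  have "0 < Henstock_Kurzweil_Integration.content ?A"
  proof (rule content_pos_lt, intro ballI)
    fix i :: "real^3" assume "i \<in> Basis"
    then obtain j where "i = axis j 1" by (auto simp: Basis_vec_def)
    thus "(\<chi> i. - pi) \<bullet> i < (\<chi> i. pi) \<bullet> i" by (simp add: inner_axis)
  qed
  hence "measure lborel ?A > 0" by simp
  thus "emeasure lborel ?A \<noteq> 0" "emeasure lborel ?A \<noteq> \<infinity>" using f
    by (auto simp: emeasure_eq_ennreal_measure)
qed

lemma dm: "disp \<in> borel_measurable torus"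
  unfolding disp_def torus_def by measurable

lemma disp_bounds: "0 \<le> disp p" "disp p \<le> 12"
proof -
  have "(\<Sum>k\<in>(UNIV::3 set). (sin (p$k / 2))\<^sup>2) \<le> of_nat (card (UNIV::3 set)) * 1"
    by (rule sum_bounded_above) (simp add: abs_sin_le_one abs_square_le_1)
  thus "disp p \<le> 12" unfolding disp_def by simp
  show "0 \<le> disp p" unfolding disp_def by (simp add: sum_nonneg)
qed

lemma dom_facts:
  assumes D: "(g, a, r) \<in> domD"
  shows "integrable torus a" "(\<integral>p. \<bar>a p\<bar> \<partial>torus) \<le> (\<integral>p. g p \<partial>torus) + 1/2"
    "(\<integral>p. \<bar>g p\<bar> \<partial>torus) = (\<integral>p. g p \<partial>torus)" "0 \<le> (\<integral>p. g p \<partial>torus)"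
    "(\<integral>p. (disp p - mu) * g p \<partial>torus) \<ge> - mu * (\<integral>p. g p \<partial>torus)"
    "Defs.entropy g a \<le> 1 + (\<integral>p. g p \<partial>torus)" "0 \<le> r"
proof -
  interpret prob_space torus by (rule ps)
  have ig: "integrable torus g" and ma: "a \<in> borel_measurable torus"
    and ae: "AE p in torus. 0 \<le> g p \<and> (a p)\<^sup>2 \<le> g p * (1 + g p)" and r: "0 \<le> r"
    using D by (auto simp: domD_def)
  show "0 \<le> r" by (rule r)
  have mg: "g \<in> borel_measurable torus" using ig by auto
  have ig2: "integrable torus (\<lambda>p. g p + 1/2)" using ig by auto
  have ae_a: "AE p in torus. \<bar>a p\<bar> \<le> g p + 1/2"
    using ae
  proof eventually_elim
    case (elim p)
    have "(a p)\<^sup>2 \<le> (g p + 1/2)\<^sup>2" using elim by (simp add: power2_eq_square algebra_simps)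
    hence "\<bar>a p\<bar> \<le> \<bar>g p + 1/2\<bar>" by (simp add: abs_le_square_iff)
    thus ?case using elim by simp
  qed
  show ia: "integrable torus a"
    by (rule Bochner_Integration.integrable_bound[OF ig2 ma]) (use ae_a in \<open>eventually_elim, auto\<close>)
  have "(\<integral>p. \<bar>a p\<bar> \<partial>torus) \<le> (\<integral>p. g p + 1/2 \<partial>torus)"
    by (rule integral_mono_AE[OF _ ig2 ae_a]) (use ia in auto)
  also have "\<dots> = (\<integral>p. g p \<partial>torus) + 1/2" using ig by (simp add: prob_space)
  finally show "(\<integral>p. \<bar>a p\<bar> \<partial>torus) \<le> (\<integral>p. g p \<partial>torus) + 1/2" .
  show "(\<integral>p. \<bar>g p\<bar> \<partial>torus) = (\<integral>p. g p \<partial>torus)"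
    by (rule integral_cong_AE) (use mg ae in \<open>auto elim!: eventually_mono\<close>)
  show rho: "0 \<le> (\<integral>p. g p \<partial>torus)"
    by (rule integral_nonneg_AE) (use ae in \<open>auto elim!: eventually_mono\<close>)
  have idg: "integrable torus (\<lambda>p. (disp p - mu) * g p)"
  proof (rule Bochner_Integration.integrable_bound)
    show "integrable torus (\<lambda>p. (12 + \<bar>mu\<bar>) * g p)" using ig by auto
    show "(\<lambda>p. (disp p - mu) * g p) \<in> borel_measurable torus" using dm mg by measurable
    show "AE p in torus. norm ((disp p - mu) * g p) \<le> norm ((12 + \<bar>mu\<bar>) * g p)"
    proof (intro AE_I2)
      fix p
      have "\<bar>disp p - mu\<bar> \<le> 12 + \<bar>mu\<bar>" using disp_bounds[of p] by linarith
      hence "\<bar>disp p - mu\<bar> * \<bar>g p\<bar> \<le> (12 + \<bar>mu\<bar>) * \<bar>g p\<bar>" by (rule mult_right_mono) simp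
      thus "norm ((disp p - mu) * g p) \<le> norm ((12 + \<bar>mu\<bar>) * g p)" by (simp add: abs_mult)
    qed
  qed
  have "(\<integral>p. - mu * g p \<partial>torus) \<le> (\<integral>p. (disp p - mu) * g p \<partial>torus)"
  proof (rule integral_mono_AE[OF _ idg])
    show "integrable torus (\<lambda>p. - mu * g p)" using ig by auto
    show "AE p in torus. - mu * g p \<le> (disp p - mu) * g p"
      using ae
    proof eventually_elim
      case (elim p)
      have "0 \<le> disp p * g p" using elim disp_bounds[of p] by simp
      thus ?case by (simp add: algebra_simps)
    qed
  qed
  thus "(\<integral>p. (disp p - mu) * g p \<partial>torus) \<ge> - mu * (\<integral>p. g p \<partial>torus)" by simp
  have ae_s: "AE p in torus. sfun (betaf g a p) \<le> 1 + g p"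
    using ae
  proof eventually_elim
    case (elim p)
    define q where "q = (1/2 + g p)\<^sup>2 - (a p)\<^sup>2"
    have q1: "(1/2)\<^sup>2 \<le> q" using elim unfolding q_def by (simp add: power2_eq_square algebra_simps)
    have b1: "1/2 \<le> betaf g a p" unfolding betaf_def q_def[symmetric] by (rule real_le_rsqrt[OF q1])
    have "q \<le> (1/2 + g p)\<^sup>2" unfolding q_def by simp
    hence "sqrt q \<le> sqrt ((1/2 + g p)\<^sup>2)" by (rule real_sqrt_le_mono)
    hence b2: "betaf g a p \<le> 1/2 + g p" unfolding betaf_def q_def[symmetric] using elim by simp
    show ?case using sfun_le[OF b1] b2 by linarith
  qed
  show "Defs.entropy g a \<le> 1 + (\<integral>p. g p \<partial>torus)"
  proof (cases "integrable torus (\<lambda>p. sfun (betaf g a p))")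
    case True
    have "Defs.entropy g a \<le> (\<integral>p. 1 + g p \<partial>torus)" unfolding Defs.entropy_def
      by (rule integral_mono_AE[OF True _ ae_s]) (use ig in auto)
    also have "\<dots> = 1 + (\<integral>p. g p \<partial>torus)" using ig by (simp add: prob_space)
    finally show ?thesis .
  next
    case False
    hence "Defs.entropy g a = 0" unfolding Defs.entropy_def by (rule not_integrable_integral_eq)
    thus ?thesis using rho by simp
  qed
qed


theorem corollary3p2:
  fixes U \<mu> T :: real
  assumes "U > 0" and "T \<ge> 0"
  shows "(\<exists>\<eta> C. \<eta> > 0 \<and> C > 0 \<and>
           (\<forall>g a r. (g, a, r) \<in> domD \<longrightarrow>
              Ffun T U \<mu> g a r \<ge> \<eta> * (r\<^sup>2 + (\<integral>p. g p \<partial>torus)\<^sup>2) - C))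
       \<and> (\<forall>(gs :: nat \<Rightarrow> real^3 \<Rightarrow> real) (as :: nat \<Rightarrow> real^3 \<Rightarrow> real) (rs :: nat \<Rightarrow> real).
            (\<forall>n. (gs n, as n, rs n) \<in> domD) \<and>
            (\<lambda>n. Ffun T U \<mu> (gs n) (as n) (rs n))
               \<longlonglongrightarrow> (INF x\<in>domD. case x of (g, a, r) \<Rightarrow> Ffun T U \<mu> g a r)
            \<longrightarrow> (\<exists>B. \<forall>n. \<bar>rs n\<bar> \<le> B \<and>
                        (\<integral>p. \<bar>gs n p\<bar> \<partial>torus) \<le> B \<and>
                        (\<integral>p. \<bar>as n p\<bar> \<partial>torus) \<le> B))"
proof -
  define \<eta> where "\<eta> = U/16"
  define C where "C = U/8 + T + 4*\<mu>\<^sup>2/U + 4*(\<bar>\<mu>\<bar>+T)\<^sup>2/U + 1"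
  have eta: "\<eta> > 0" using assms by (simp add: \<eta>_def)
  have Cpos: "C > 0" using assms unfolding C_def by (simp add: add_nonneg_pos)
  have main: "Ffun T U \<mu> g a r \<ge> \<eta> * (r\<^sup>2 + (\<integral>p. g p \<partial>torus)\<^sup>2) - C"
    if D: "(g, a, r) \<in> domD" for g a r
  proof -
    note F = dom_facts[OF D]
    have A: "\<bar>\<integral>p. a p \<partial>torus\<bar> \<le> (\<integral>p. g p \<partial>torus) + 1/2"
      using integral_abs_bound[of torus a] F(2) by linarith
    have TS: "T * Defs.entropy g a \<le> T + T * (\<integral>p. g p \<partial>torus)"
      using mult_left_mono[OF F(6) assms(2)] by (simp add: algebra_simps)
    show ?thesis unfolding Ffun_def \<eta>_def C_def
      by (rule alg[OF assms(1,2) F(7) F(4) A F(5) TS])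
  qed
  show ?thesis
  proof (intro conjI allI impI)
    show "\<exists>\<eta> C. \<eta> > 0 \<and> C > 0 \<and>
           (\<forall>g a r. (g, a, r) \<in> domD \<longrightarrow>
              Ffun T U \<mu> g a r \<ge> \<eta> * (r\<^sup>2 + (\<integral>p. g p \<partial>torus)\<^sup>2) - C)"
      using eta Cpos main by blast
  next
    fix gs :: "nat \<Rightarrow> real^3 \<Rightarrow> real" and as :: "nat \<Rightarrow> real^3 \<Rightarrow> real" and rs :: "nat \<Rightarrow> real"
    assume H: "(\<forall>n. (gs n, as n, rs n) \<in> domD) \<and>
            (\<lambda>n. Ffun T U \<mu> (gs n) (as n) (rs n))
               \<longlonglongrightarrow> (INF x\<in>domD. case x of (g, a, r) \<Rightarrow> Ffun T U \<mu> g a r)"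
    hence "Bseq (\<lambda>n. Ffun T U \<mu> (gs n) (as n) (rs n))" using convergent_imp_Bseq convergentI by blast
    then obtain K where K: "\<And>n. norm (Ffun T U \<mu> (gs n) (as n) (rs n)) \<le> K" by (auto simp: Bseq_def)
    define B where "B = 1 + (K + C) / \<eta> + 1/2"
    show "\<exists>B. \<forall>n. \<bar>rs n\<bar> \<le> B \<and>
                        (\<integral>p. \<bar>gs n p\<bar> \<partial>torus) \<le> B \<and>
                        (\<integral>p. \<bar>as n p\<bar> \<partial>torus) \<le> B"
    proof (intro exI allI)
      fix n
      have D: "(gs n, as n, rs n) \<in> domD" using H by blast
      note F = dom_facts[OF D]
      define \<rho> where "\<rho> = (\<integral>p. gs n p \<partial>torus)"
      have "\<eta> * ((rs n)\<^sup>2 + \<rho>\<^sup>2) - C \<le> K"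
        using main[OF D] K[of n] unfolding \<rho>_def by auto
      hence "(rs n)\<^sup>2 + \<rho>\<^sup>2 \<le> (K + C) / \<eta>" using eta by (simp add: field_simps)
      moreover have "rs n \<le> 1 + (rs n)\<^sup>2" "\<rho> \<le> 1 + \<rho>\<^sup>2"
        using sqb[of 16 1 "rs n"] sqb[of 16 1 \<rho>] by auto
      moreover have "0 \<le> (rs n)\<^sup>2" "0 \<le> \<rho>\<^sup>2" by auto
      ultimately have b1: "rs n \<le> 1 + (K + C) / \<eta>" "\<rho> \<le> 1 + (K + C) / \<eta>" by linarith+
      show "\<bar>rs n\<bar> \<le> B \<and> (\<integral>p. \<bar>gs n p\<bar> \<partial>torus) \<le> B \<and> (\<integral>p. \<bar>as n p\<bar> \<partial>torus) \<le> B"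
        using b1 F(2,3,7) unfolding B_def \<rho>_def by auto
    qed
  qed
qed

end
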